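(* Let $K\in\mathbb{R}^{n\times n}$ be diagonalizable with spectrum $\sigma(K)\subset(-\infty,0)$. Let $\mathcal{A}=I_m\otimes I_n-(I^{(-1)}D)\otimes K$ and $\mathcal{P}=I_m\otimes I_n-(SD)\otimes K$. Then $\mathcal{P}$ is nonsingular, $\mathcal{P}^{-1}\mathcal{A}$ has the eigenvalue $1$ with algebraic multiplicity at least $n(m-1)$ (at most $n$ eigenvalues, counted with multiplicity, differ from $1$), and $\sigma(\mathcal{P}^{-1}\mathcal{A})\subset[1,\infty)$.
   Context: $M\ge1$, $m=2M+1$, $h>0$, $T>0$. Sinc time points $t_j=\dfrac{T e^{jh}}{1+e^{jh}}$, $j=-M,\dots,M$. $D=h\,\mathrm{diag}\big(t_{-M}(T-t_{-M})/T,\dots,t_M(T-t_M)/T\big)$. $I^{(-1)}\in\mathbb{R}^{m\times m}$ is the Toeplitz matrix with entries $I^{(-1)}_{l,j}=\frac12+\int_0^{l-j}\frac{\sin(\pi t)}{\pi t}\,dt$. $S:=\frac12\big(I^{(-1)}-(I^{(-1)})^{\mathsf T}\big)$ (equivalently $S=I^{(-1)}-\frac12 e_me_m^{\mathsf T}$ with $e_m$ the all-ones vector). $\otimes$ is the Kronecker product and $I_p$ the $p\times p$ identity. *)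

theory Defs
  imports "HOL-Analysis.Analysis" "Jordan_Normal_Form.Jordan_Normal_Form"
begin

definition kron_mat :: "'a::times mat \<Rightarrow> 'a mat \<Rightarrow> 'a mat" where
  "kron_mat A B = mat (dim_row A * dim_row B) (dim_col A * dim_col B)
     (\<lambda>(i,j). A $$ (i div dim_row B, j div dim_col B) * B $$ (i mod dim_row B, j mod dim_col B))"

definition sinc_pt :: "real \<Rightarrow> real \<Rightarrow> int \<Rightarrow> real" where
  "sinc_pt T h j = T * exp (of_int j * h) / (1 + exp (of_int j * h))"

definition Si_pi :: "real \<Rightarrow> real" where
  "Si_pi x = (if 0 \<le> x then integral {0..x} (\<lambda>t. sin (pi * t) / (pi * t))
              else - integral {x..0} (\<lambda>t. sin (pi * t) / (pi * t)))"

text \<open>Matrix I^(-1) of size m = 2M+1; row/column index l corresponds to l - M.\<close>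
definition Im1_mat :: "nat \<Rightarrow> real mat" where
  "Im1_mat M = mat (2*M+1) (2*M+1) (\<lambda>(l,j). 1/2 + Si_pi (real_of_int (int l - int j)))"

definition S_mat :: "nat \<Rightarrow> real mat" where
  "S_mat M = (1/2) \<cdot>\<^sub>m (Im1_mat M - transpose_mat (Im1_mat M))"

definition D_mat :: "nat \<Rightarrow> real \<Rightarrow> real \<Rightarrow> real mat" where
  "D_mat M h T = mat (2*M+1) (2*M+1) (\<lambda>(l,j). if l = j then
      h * (sinc_pt T h (int l - int M) * (T - sinc_pt T h (int l - int M)) / T) else 0)"

definition A_mat :: "nat \<Rightarrow> real \<Rightarrow> real \<Rightarrow> real mat \<Rightarrow> real mat" where
  "A_mat M h T K = 1\<^sub>m ((2*M+1) * dim_row K) - kron_mat (Im1_mat M * D_mat M h T) K"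

definition P_mat :: "nat \<Rightarrow> real \<Rightarrow> real \<Rightarrow> real mat \<Rightarrow> real mat" where
  "P_mat M h T K = 1\<^sub>m ((2*M+1) * dim_row K) - kron_mat (S_mat M * D_mat M h T) K"

end

theory Submission
  imports Defs
begin


lemma skew_quad_zero:
  fixes a :: "nat \<Rightarrow> 'a::field_char_0" and s :: "nat \<Rightarrow> nat \<Rightarrow> 'a"
  assumes skew: "\<forall>l<m. \<forall>j<m. s l j = - s j l"
  shows "(\<Sum>l<m. \<Sum>j<m. a l * s l j * a j) = 0"
proof -
  let ?Q = "(\<Sum>l<m. \<Sum>j<m. a l * s l j * a j)"
  have "?Q = (\<Sum>j<m. \<Sum>l<m. a l * s l j * a j)" by (rule sum.swap)
  also have "\<dots> = (\<Sum>j<m. \<Sum>l<m. - (a j * s j l * a l))"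
  proof (intro sum.cong refl)
    fix j l assume "j \<in> {..<m}" "l \<in> {..<m}"
    hence "s l j = - s j l" using skew by blast
    thus "a l * s l j * a j = - (a j * s j l * a l)" by (simp add: algebra_simps)
  qed
  also have "\<dots> = - ?Q" by (simp add: sum_negf)
  finally show ?thesis by simp
qed

lemma core_real:
  fixes s :: "nat \<Rightarrow> nat \<Rightarrow> real" and d x :: "nat \<Rightarrow> real" and lam :: real
  assumes skew: "\<forall>l<m. \<forall>j<m. s l j = - s j l" and dpos: "\<forall>l<m. d l > 0"
    and eq: "\<forall>l<m. x l - lam * (\<Sum>j<m. s l j * d j * x j) = 0"
  shows "\<forall>l<m. x l = 0"
proof -
  have "(\<Sum>l<m. d l * x l * (x l - lam * (\<Sum>j<m. s l j * d j * x j))) = 0"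
    using eq by simp
  moreover have "(\<Sum>l<m. d l * x l * (x l - lam * (\<Sum>j<m. s l j * d j * x j)))
     = (\<Sum>l<m. d l * x l ^ 2) - lam * (\<Sum>l<m. \<Sum>j<m. (d l * x l) * s l j * (d j * x j))"
    by (simp add: algebra_simps power2_eq_square sum_subtractf sum_distrib_left sum_distrib_right)
  moreover have "(\<Sum>l<m. \<Sum>j<m. (d l * x l) * s l j * (d j * x j)) = 0"
    using skew_quad_zero[OF skew, of "\<lambda>l. d l * x l"] by simp
  ultimately have s0: "(\<Sum>l<m. d l * x l ^ 2) = 0" by simp
  have "\<forall>l\<in>{..<m}. d l * x l ^ 2 = 0"
    using sum_nonneg_eq_0_iff[of "{..<m}" "\<lambda>l. d l * x l ^ 2"] s0 dpos
    by (simp add: less_imp_le)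
  show ?thesis
  proof (intro allI impI)
    fix l assume l: "l < m"
    hence "d l * x l ^ 2 = 0" "d l > 0" using \<open>\<forall>l\<in>{..<m}. d l * x l ^ 2 = 0\<close> dpos by auto
    thus "x l = 0" by simp
  qed
qed

lemma core_cplx:
  fixes s :: "nat \<Rightarrow> nat \<Rightarrow> real" and d :: "nat \<Rightarrow> real" and lam :: real and w :: "nat \<Rightarrow> complex"
  assumes skew: "\<forall>l<m. \<forall>j<m. s l j = - s j l" and dpos: "\<forall>l<m. d l > 0"
    and eq: "\<forall>l<m. w l - of_real lam * (\<Sum>j<m. of_real (s l j * d j) * w j) = 0"
  shows "\<forall>l<m. w l = 0"
proof -
  have "\<forall>l<m. Re (w l) = 0"
  proof (rule core_real[OF skew dpos], intro allI impI)
    fix l assume l: "l < m"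
    have "Re (w l - of_real lam * (\<Sum>j<m. of_real (s l j * d j) * w j)) = 0" using eq l by simp
    thus "Re (w l) - lam * (\<Sum>j<m. s l j * d j * Re (w j)) = 0" by (simp add: Re_sum)
  qed
  moreover have "\<forall>l<m. Im (w l) = 0"
  proof (rule core_real[OF skew dpos], intro allI impI)
    fix l assume l: "l < m"
    have "Im (w l - of_real lam * (\<Sum>j<m. of_real (s l j * d j) * w j)) = 0" using eq l by simp
    thus "Im (w l) - lam * (\<Sum>j<m. s l j * d j * Im (w j)) = 0" by (simp add: Im_sum)
  qed
  ultimately show ?thesis
  proof (intro allI impI)
    fix l assume "\<forall>l<m. Re (w l) = 0" "\<forall>l<m. Im (w l) = 0" "l < m"
    hence "Re (w l) = 0" "Im (w l) = 0" by blast+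
    thus "w l = 0" by (simp add: complex_eq_iff)
  qed
qed

lemma core_eig:
  fixes s :: "nat \<Rightarrow> nat \<Rightarrow> real" and d :: "nat \<Rightarrow> real" and lam :: real
    and w :: "nat \<Rightarrow> complex" and mu :: complex
  assumes skew: "\<forall>l<m. \<forall>j<m. s l j = - s j l" and dpos: "\<forall>l<m. d l > 0"
    and lam: "lam < 0" and nz: "\<exists>l<m. w l \<noteq> 0"
    and eq: "\<forall>l<m. (1 - mu) * (w l - of_real lam * (\<Sum>j<m. of_real (s l j * d j) * w j))
                  = of_real (lam / 2) * (\<Sum>j<m. of_real (d j) * w j)"
  shows "mu \<in> \<real> \<and> Re mu \<ge> 1"
proof (cases "mu = 1")
  case True thus ?thesis by simp
next
  case False
  define sg where "sg = (\<Sum>j<m. of_real (d j) * w j)"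
  have sg: "sg \<noteq> 0"
  proof
    assume "sg = 0"
    hence "\<forall>l<m. w l - of_real lam * (\<Sum>j<m. of_real (s l j * d j) * w j) = 0"
      using eq False unfolding sg_def by auto
    from core_cplx[OF skew dpos this] nz show False by blast
  qed
  define y where "y l = (1 - mu) * w l / sg" for l
  have eqy: "y l - of_real lam * (\<Sum>j<m. of_real (s l j * d j) * y j) = of_real (lam / 2)" if l: "l < m" for l
  proof -
    have "(\<Sum>j<m. of_real (s l j * d j) * y j) = (1 - mu) / sg * (\<Sum>j<m. of_real (s l j * d j) * w j)"
      unfolding y_def by (simp add: sum_distrib_left algebra_simps)
    hence "y l - of_real lam * (\<Sum>j<m. of_real (s l j * d j) * y j)
        = (1 - mu) * (w l - of_real lam * (\<Sum>j<m. of_real (s l j * d j) * w j)) / sg"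
    proof -
      have gen: "\<And>a b c. (1 - mu) * a / sg - c * ((1 - mu) / sg * b) = (1 - mu) * (a - c * b) / sg"
        using sg by (simp add: field_simps)
      show ?thesis unfolding y_def[of l] \<open>(\<Sum>j<m. of_real (s l j * d j) * y j) = _\<close> by (rule gen)
    qed
    also have "\<dots> = of_real (lam / 2)" using eq l sg unfolding sg_def by simp
    finally show ?thesis .
  qed
  have imy: "\<forall>l<m. Im (y l) = 0"
  proof (rule core_real[OF skew dpos], intro allI impI)
    fix l assume l: "l < m"
    have "Im (y l - of_real lam * (\<Sum>j<m. of_real (s l j * d j) * y j)) = 0" unfolding eqy[OF l] by simp
    thus "Im (y l) - lam * (\<Sum>j<m. s l j * d j * Im (y j)) = 0" by (simp add: Im_sum)
  qed
  define r where "r l = Re (y l)" for l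
  have yr: "y l = of_real (r l)" if "l < m" for l
    using imy that unfolding r_def by (simp add: complex_eq_iff)
  have sumy: "(\<Sum>j<m. of_real (d j) * y j) = 1 - mu"
  proof -
    have "(\<Sum>j<m. of_real (d j) * y j) = (1 - mu) / sg * sg"
      unfolding y_def sg_def by (simp add: sum_distrib_left sum_divide_distrib algebra_simps)
    thus ?thesis using sg by simp
  qed
  have "(\<Sum>j<m. of_real (d j) * y j) = of_real (\<Sum>j<m. d j * r j)"
    using yr by simp
  hence mu_eq: "mu = of_real (1 - (\<Sum>j<m. d j * r j))" using sumy
    by (metis add_diff_cancel_left' diff_add_cancel of_real_1 of_real_diff)
  have eqr: "r l - lam * (\<Sum>j<m. s l j * d j * r j) = lam / 2" if l: "l < m" for l
  proof -
    have "Re (y l - of_real lam * (\<Sum>j<m. of_real (s l j * d j) * y j)) = lam / 2" unfolding eqy[OF l] by simp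
    thus ?thesis unfolding r_def by (simp add: Re_sum)
  qed
  have "(\<Sum>l<m. d l * r l * (r l - lam * (\<Sum>j<m. s l j * d j * r j))) = (\<Sum>l<m. d l * r l * (lam / 2))"
    by (intro sum.cong refl) (simp only: lessThan_iff eqr)
  moreover have "(\<Sum>l<m. d l * r l * (r l - lam * (\<Sum>j<m. s l j * d j * r j)))
     = (\<Sum>l<m. d l * r l ^ 2) - lam * (\<Sum>l<m. \<Sum>j<m. (d l * r l) * s l j * (d j * r j))"
    by (simp add: algebra_simps power2_eq_square sum_subtractf sum_distrib_left sum_distrib_right)
  moreover have "(\<Sum>l<m. \<Sum>j<m. (d l * r l) * s l j * (d j * r j)) = 0"
    using skew_quad_zero[OF skew, of "\<lambda>l. d l * r l"] by simp
  ultimately have "(\<Sum>l<m. d l * r l ^ 2) = (\<Sum>l<m. d l * r l * (lam / 2))"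
    by (metis diff_zero mult_zero_right)
  also have "\<dots> = lam / 2 * (\<Sum>l<m. d l * r l)" by (simp add: sum_distrib_left mult.commute)
  finally have key: "(\<Sum>l<m. d l * r l ^ 2) = lam / 2 * (\<Sum>l<m. d l * r l)" .
  obtain l0 where l0: "l0 < m" using nz by blast
  have "\<exists>l<m. r l \<noteq> 0"
  proof (rule ccontr)
    assume "\<not> (\<exists>l<m. r l \<noteq> 0)"
    hence "\<forall>l<m. r l = 0" by blast
    with eqr[OF l0] l0 lam show False by simp
  qed
  then obtain l1 where l1: "l1 < m" "r l1 \<noteq> 0" by blast
  have "0 < d l1 * r l1 ^ 2" using dpos l1 by simp
  also have "\<dots> \<le> (\<Sum>l<m. d l * r l ^ 2)"
    using l1 dpos by (intro member_le_sum) (auto intro: mult_nonneg_nonneg less_imp_le)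
  finally have "lam / 2 * (\<Sum>l<m. d l * r l) > 0" using key by simp
  hence "(\<Sum>l<m. d l * r l) < 0" using lam by (simp add: zero_less_mult_iff)
  thus ?thesis using mu_eq by simp
qed




lemma sum_div_mod_nat:
  "(\<Sum>t<p*q. f t) = (\<Sum>a<p. \<Sum>b<q. f (a*q+b :: nat))"
proof (induction p)
  case 0 thus ?case by simp
next
  case (Suc p)
  have "(\<Sum>t<Suc p*q. f t) = (\<Sum>t<p*q. f t) + (\<Sum>t\<in>{p*q..<p*q+q}. f t)"
    by (simp add: sum.atLeastLessThan_concat[symmetric] lessThan_atLeast0 add.commute)
  also have "(\<Sum>t\<in>{p*q..<p*q+q}. f t) = (\<Sum>b<q. f (p*q+b))"
    by (rule sum.reindex_bij_witness[of _ "\<lambda>b. p*q+b" "\<lambda>t. t - p*q"]) auto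
  finally show ?case using Suc by simp
qed

lemma kron_carrier[simp]: "kron_mat A B \<in> carrier_mat (dim_row A * dim_row B) (dim_col A * dim_col B)"
  unfolding kron_mat_def by simp

lemma kron_dims[simp]: "dim_row (kron_mat A B) = dim_row A * dim_row B"
  "dim_col (kron_mat A B) = dim_col A * dim_col B"
  unfolding kron_mat_def by simp_all

lemma kron_index:
  "i < dim_row A * dim_row B \<Longrightarrow> j < dim_col A * dim_col B \<Longrightarrow>
   kron_mat A B $$ (i,j) = A $$ (i div dim_row B, j div dim_col B) * B $$ (i mod dim_row B, j mod dim_col B)"
  unfolding kron_mat_def by simp

lemma kron_mult:
  fixes A B C D :: "'a::comm_semiring_1 mat"
  assumes A: "A \<in> carrier_mat a1 a2" and B: "B \<in> carrier_mat b1 b2"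
    and C: "C \<in> carrier_mat a2 a3" and D: "D \<in> carrier_mat b2 b3"
  shows "kron_mat A B * kron_mat C D = kron_mat (A * C) (B * D)"
proof (rule eq_matI)
  show "dim_row (kron_mat A B * kron_mat C D) = dim_row (kron_mat (A * C) (B * D))"
    using A B C D by simp
  show "dim_col (kron_mat A B * kron_mat C D) = dim_col (kron_mat (A * C) (B * D))"
    using A B C D by simp
  fix i j assume i: "i < dim_row (kron_mat (A * C) (B * D))" and j: "j < dim_col (kron_mat (A * C) (B * D))"
  hence i': "i < a1 * b1" and j': "j < a3 * b3" using A B C D by auto
  have b1: "b1 > 0" and b3: "b3 > 0" using i' j' by (auto intro!: Nat.gr0I)
  have idiv: "i div b1 < a1" using i' by (simp add: less_mult_imp_div_less)
  have jdiv: "j div b3 < a3" using j' by (simp add: less_mult_imp_div_less)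
  have imod: "i mod b1 < b1" and jmod: "j mod b3 < b3" using b1 b3 by auto
  have "(kron_mat A B * kron_mat C D) $$ (i,j)
      = (\<Sum>t<a2*b2. kron_mat A B $$ (i,t) * kron_mat C D $$ (t,j))"
    using A B C D i' j' by (simp add: scalar_prod_def lessThan_atLeast0)
  also have "\<dots> = (\<Sum>a<a2. \<Sum>b<b2. kron_mat A B $$ (i,a*b2+b) * kron_mat C D $$ (a*b2+b,j))"
    by (rule sum_div_mod_nat)
  also have "\<dots> = (\<Sum>a<a2. \<Sum>b<b2. (A $$ (i div b1, a) * C $$ (a, j div b3)) * (B $$ (i mod b1, b) * D $$ (b, j mod b3)))"
  proof (intro sum.cong refl)
    fix a b assume a: "a \<in> {..<a2}" and b: "b \<in> {..<b2}"
    have "a*b2+b < (a+1)*b2" using b by simp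
    also have "(a+1)*b2 \<le> a2*b2" using a by (intro mult_right_mono) auto
    finally have t: "a*b2+b < a2*b2" .
    have dm: "(a*b2+b) div b2 = a" "(a*b2+b) mod b2 = b" using b by auto
    show "kron_mat A B $$ (i,a*b2+b) * kron_mat C D $$ (a*b2+b,j)
      = (A $$ (i div b1, a) * C $$ (a, j div b3)) * (B $$ (i mod b1, b) * D $$ (b, j mod b3))"
    proof -
      have "kron_mat A B $$ (i,a*b2+b) = A $$ (i div b1, a) * B $$ (i mod b1, b)"
        using A B C D i' j' t b by (simp add: kron_index dm)
      moreover have "kron_mat C D $$ (a*b2+b,j) = C $$ (a, j div b3) * D $$ (b, j mod b3)"
        using A B C D i' j' t b by (simp add: kron_index dm)
      ultimately show ?thesis by (simp add: ac_simps)
    qed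
  qed
  also have "\<dots> = (\<Sum>a<a2. A $$ (i div b1, a) * C $$ (a, j div b3)) * (\<Sum>b<b2. B $$ (i mod b1, b) * D $$ (b, j mod b3))"
    by (simp add: sum_product)
  also have "\<dots> = (A * C) $$ (i div b1, j div b3) * (B * D) $$ (i mod b1, j mod b3)"
    using A B C D idiv jdiv imod jmod by (simp add: scalar_prod_def lessThan_atLeast0)
  also have "\<dots> = kron_mat (A * C) (B * D) $$ (i,j)"
    using A B C D i' j' by (simp add: kron_index)
  finally show "(kron_mat A B * kron_mat C D) $$ (i,j) = kron_mat (A * C) (B * D) $$ (i,j)" .
qed




lemma div_mod_bnd: "(i::nat) < a * b \<Longrightarrow> i div b < a \<and> i mod b < b"
  by (metis less_mult_imp_div_less mod_less_divisor mult_0_right not_gr_zero not_less_zero)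

lemma kron_add_left:
  fixes A B C :: "'a::comm_ring_1 mat"
  assumes "A \<in> carrier_mat a1 a2" "B \<in> carrier_mat a1 a2"
  shows "kron_mat (A + B) C = kron_mat A C + kron_mat B C"
proof (rule eq_matI)
  fix i j assume "i < dim_row (kron_mat A C + kron_mat B C)" "j < dim_col (kron_mat A C + kron_mat B C)"
  hence ij: "i < a1 * dim_row C" "j < a2 * dim_col C" using assms by auto
  from div_mod_bnd[OF ij(1)] div_mod_bnd[OF ij(2)] show "kron_mat (A + B) C $$ (i,j) = (kron_mat A C + kron_mat B C) $$ (i,j)"
    using assms ij by (simp add: kron_index algebra_simps)
qed (use assms in auto)

lemma kron_one: "kron_mat (1\<^sub>m a) (1\<^sub>m b) = (1\<^sub>m (a*b) :: 'a::semiring_1 mat)"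
proof (rule eq_matI)
  fix i j assume "i < dim_row (1\<^sub>m (a*b) :: 'a mat)" "j < dim_col (1\<^sub>m (a*b) :: 'a mat)"
  hence ij: "i < a*b" "j < a*b" by auto
  hence b: "b > 0" by (auto intro!: Nat.gr0I)
  have "i div b < a" "j div b < a" using ij by (auto simp: less_mult_imp_div_less)
  moreover have "(i = j) = (i div b = j div b \<and> i mod b = j mod b)"
    by (metis div_mult_mod_eq)
  ultimately show "kron_mat (1\<^sub>m a) (1\<^sub>m b) $$ (i,j) = (1\<^sub>m (a*b) :: 'a mat) $$ (i,j)"
    using ij b by (simp add: kron_index)
qed auto

lemma kron_map: "map_mat (of_real :: real \<Rightarrow> complex) (kron_mat A B) = kron_mat (map_mat of_real A) (map_mat of_real B)"
proof (rule eq_matI)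
  fix i j assume "i < dim_row (kron_mat (map_mat (of_real :: real \<Rightarrow> complex) A) (map_mat of_real B))"
    "j < dim_col (kron_mat (map_mat (of_real :: real \<Rightarrow> complex) A) (map_mat of_real B))"
  hence ij: "i < dim_row A * dim_row B" "j < dim_col A * dim_col B" by auto
  from div_mod_bnd[OF ij(1)] div_mod_bnd[OF ij(2)] show "map_mat of_real (kron_mat A B) $$ (i,j) = kron_mat (map_mat (of_real :: real \<Rightarrow> complex) A) (map_mat of_real B) $$ (i,j)"
    using ij by (simp add: kron_index)
qed auto

lemma sum_if_delta: "(\<Sum>t<m. (f :: nat \<Rightarrow> 'a::comm_semiring_1) t * (if t = j then g else 0)) = (if j < m then f j * g else 0)"
proof -
  have "(\<Sum>t<m. f t * (if t = j then g else 0)) = (\<Sum>t<m. if t = j then f j * g else 0)"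
    by (intro sum.cong refl) auto
  thus ?thesis by simp
qed

definition dd :: "nat \<Rightarrow> real \<Rightarrow> real \<Rightarrow> nat \<Rightarrow> real" where
  "dd M h T l = h * (sinc_pt T h (int l - int M) * (T - sinc_pt T h (int l - int M)) / T)"

lemma dd_pos: assumes "h > 0" "T > 0" shows "dd M h T l > 0"
proof -
  let ?e = "exp (real_of_int (int l - int M) * h)"
  have e: "?e > 0" by simp
  have t1: "sinc_pt T h (int l - int M) > 0" unfolding sinc_pt_def using assms e
    by (intro divide_pos_pos mult_pos_pos) (auto intro: add_pos_pos)
  have "sinc_pt T h (int l - int M) = T * (?e / (1 + ?e))" unfolding sinc_pt_def by simp
  also have "?e / (1+?e) < 1" using e by (subst divide_less_eq_1_pos) (linarith, linarith)
  hence "T * (?e / (1 + ?e)) < T * 1" using assms by (intro mult_strict_left_mono) auto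
  finally have t2: "T - sinc_pt T h (int l - int M) > 0" by simp
  show ?thesis unfolding dd_def using assms t1 t2 by simp
qed

lemma D_index: "l < 2*M+1 \<Longrightarrow> j < 2*M+1 \<Longrightarrow> D_mat M h T $$ (l,j) = (if l = j then dd M h T l else 0)"
  unfolding D_mat_def dd_def by simp

lemma D_carrier[simp]: "D_mat M h T \<in> carrier_mat (2*M+1) (2*M+1)"
  unfolding D_mat_def by simp
lemma Im1_carrier[simp]: "Im1_mat M \<in> carrier_mat (2*M+1) (2*M+1)"
  unfolding Im1_mat_def by simp
lemma S_carrier[simp]: "S_mat M \<in> carrier_mat (2*M+1) (2*M+1)"
  unfolding S_mat_def carrier_mat_def by (simp add: Im1_mat_def)

lemma D_carrier'[simp]: "D_mat M h T \<in> carrier_mat (Suc (2*M)) (Suc (2*M))"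
  using D_carrier[of M h T] by simp
lemma Im1_carrier'[simp]: "Im1_mat M \<in> carrier_mat (Suc (2*M)) (Suc (2*M))"
  using Im1_carrier[of M] by simp
lemma S_carrier'[simp]: "S_mat M \<in> carrier_mat (Suc (2*M)) (Suc (2*M))"
  using S_carrier[of M] by simp

lemma mats_dims[simp]: "dim_row (D_mat M h T) = Suc (2*M)" "dim_col (D_mat M h T) = Suc (2*M)"
  "dim_row (S_mat M) = Suc (2*M)" "dim_col (S_mat M) = Suc (2*M)"
  "dim_row (Im1_mat M) = Suc (2*M)" "dim_col (Im1_mat M) = Suc (2*M)"
  by (auto simp: D_mat_def S_mat_def Im1_mat_def)

lemma mult_diag_index:
  fixes X Dg :: "'a::comm_ring_1 mat"
  assumes X: "X \<in> carrier_mat r m" and Dg: "Dg \<in> carrier_mat m m" and l: "l < r" and j: "j < m"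
    and dg: "\<And>t. t < m \<Longrightarrow> Dg $$ (t,j) = (if t = j then c else 0)"
  shows "(X * Dg) $$ (l,j) = X $$ (l,j) * c"
proof -
  have "(X * Dg) $$ (l,j) = (\<Sum>t<m. X $$ (l,t) * Dg $$ (t,j))"
    using X Dg l j by (simp add: scalar_prod_def lessThan_atLeast0)
  also have "\<dots> = (\<Sum>t<m. X $$ (l,t) * (if t = j then c else 0))"
    using dg by (intro sum.cong refl) auto
  finally show ?thesis using j by (simp add: sum_if_delta)
qed

lemma mult_D_index:
  assumes "X \<in> carrier_mat r (2*M+1)" "l < r" "j < 2*M+1"
  shows "(X * D_mat M h T) $$ (l,j) = X $$ (l,j) * dd M h T j"
  by (rule mult_diag_index[OF assms(1) D_carrier assms(2,3)]) (use assms in \<open>auto simp: D_index\<close>)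

lemma Si_pi_odd: "Si_pi (- x) = - Si_pi x"
proof -
  let ?f = "\<lambda>t::real. sin (pi * t) / (pi * t)"
  have fe: "(\<lambda>t. ?f (- t)) = ?f" by (rule ext) simp
  have refl: "integral {-b..0} ?f = integral {0..b} ?f" for b
    using Henstock_Kurzweil_Integration.integral_reflect_real[of b 0 ?f] by (simp add: fe)
  show ?thesis
  proof (cases "x > 0")
    case True thus ?thesis unfolding Si_pi_def using refl[of x] by simp
  next
    case False
    show ?thesis
    proof (cases "x = 0")
      case True thus ?thesis unfolding Si_pi_def by simp
    next
      case False2: False
      hence "x < 0" using False by simp
      thus ?thesis unfolding Si_pi_def using refl[of "-x"] by simp
    qed
  qed
qed

lemma S_index: "l < 2*M+1 \<Longrightarrow> j < 2*M+1 \<Longrightarrow>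
   S_mat M $$ (l,j) = Si_pi (real_of_int (int l - int j))"
proof -
  assume a: "l < 2*M+1" "j < 2*M+1"
  have "real_of_int (int j - int l) = - real_of_int (int l - int j)" by simp
  hence "Si_pi (real_of_int (int j - int l)) = - Si_pi (real_of_int (int l - int j))"
    by (simp only: Si_pi_odd)
  thus ?thesis using a unfolding S_mat_def Im1_mat_def by simp
qed

lemma S_skew: "l < 2*M+1 \<Longrightarrow> j < 2*M+1 \<Longrightarrow> S_mat M $$ (l,j) = - S_mat M $$ (j,l)"
  unfolding S_mat_def by (simp add: Im1_mat_def field_simps)

lemma Im1_split: "Im1_mat M = S_mat M + mat (2*M+1) (2*M+1) (\<lambda>_. 1/2)"
  by (rule eq_matI) (auto simp: S_index Im1_mat_def)




lemma ln_k_bound: "l < m \<Longrightarrow> k < n \<Longrightarrow> l * n + k < m * (n::nat)"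
proof -
  assume a: "l < m" "k < n"
  have "l*n+k < (l+1)*n" using a by simp
  also have "(l+1)*n \<le> m*n" using a by (intro mult_right_mono) auto
  finally show ?thesis .
qed

lemma kron_carrier':
  "A \<in> carrier_mat a1 a2 \<Longrightarrow> B \<in> carrier_mat b1 b2 \<Longrightarrow> kron_mat A B \<in> carrier_mat (a1*b1) (a2*b2)"
  by auto

lemma mult_zero_vec': "A \<in> carrier_mat nr nc \<Longrightarrow> A *\<^sub>v 0\<^sub>v nc = (0\<^sub>v nr :: 'a::comm_ring_1 vec)"
  by (intro eq_vecI) (auto simp: scalar_prod_def)

lemma kron_diag_mult_vec:
  fixes C L :: "complex mat"
  assumes C: "C \<in> carrier_mat m m" and L: "L \<in> carrier_mat n n" and dL: "diagonal_mat L"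
    and w: "w \<in> carrier_vec (m*n)" and l: "l < m" and k: "k < n"
  shows "(kron_mat C L *\<^sub>v w) $ (l*n+k) = L $$ (k,k) * (\<Sum>l'<m. C $$ (l,l') * w $ (l'*n+k))"
proof -
  have i: "l*n+k < m*n" using l k by (rule ln_k_bound)
  have dm: "(l*n+k) div n = l" "(l*n+k) mod n = k" using k by auto
  have "(kron_mat C L *\<^sub>v w) $ (l*n+k) = (\<Sum>t<m*n. kron_mat C L $$ (l*n+k,t) * w $ t)"
    using C L w i by (simp add: scalar_prod_def lessThan_atLeast0)
  also have "\<dots> = (\<Sum>a<m. \<Sum>b<n. kron_mat C L $$ (l*n+k,a*n+b) * w $ (a*n+b))"
    by (rule sum_div_mod_nat)
  also have "\<dots> = (\<Sum>a<m. \<Sum>b<n. (C $$ (l,a) * w $ (a*n+b)) * (if b = k then L $$ (k,k) else 0))"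
  proof (intro sum.cong refl)
    fix a b assume a: "a \<in> {..<m}" and b: "b \<in> {..<n}"
    have t: "a*n+b < m*n" using a b ln_k_bound by auto
    have dm2: "(a*n+b) div n = a" "(a*n+b) mod n = b" using b by auto
    have "L $$ (k,b) = (if b = k then L $$ (k,k) else 0)"
      using dL L k b unfolding diagonal_mat_def by auto
    thus "kron_mat C L $$ (l*n+k,a*n+b) * w $ (a*n+b) = (C $$ (l,a) * w $ (a*n+b)) * (if b = k then L $$ (k,k) else 0)"
      using C L i t k b by (simp add: kron_index dm dm2)
  qed
  also have "\<dots> = (\<Sum>a<m. C $$ (l,a) * w $ (a*n+k) * L $$ (k,k))"
    using k by (simp add: sum_if_delta)
  also have "\<dots> = L $$ (k,k) * (\<Sum>l'<m. C $$ (l,l') * w $ (l'*n+k))"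
    by (simp add: sum_distrib_left ac_simps)
  finally show ?thesis .
qed

lemma decouple:
  fixes K :: "real mat" and L Pm Qm C1 C2 :: "complex mat" and v :: "complex vec"
  assumes K: "K \<in> carrier_mat n n"
    and wit: "similar_mat_wit (map_mat of_real K) L Pm Qm" and dL: "diagonal_mat L"
    and C1: "C1 \<in> carrier_mat m m" and C2: "C2 \<in> carrier_mat m m"
    and v: "v \<in> carrier_vec (m*n)" and vnz: "v \<noteq> 0\<^sub>v (m*n)"
    and eq: "\<alpha> \<cdot>\<^sub>v (v - kron_mat C1 (map_mat of_real K) *\<^sub>v v) = \<beta> \<cdot>\<^sub>v (kron_mat C2 (map_mat of_real K) *\<^sub>v v)"
  shows "\<exists>k<n. \<exists>W. (\<exists>l<m. W l \<noteq> 0) \<and> eigenvalue (map_mat of_real K) (L $$ (k,k)) \<and>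
     (\<forall>l<m. \<alpha> * (W l - L $$ (k,k) * (\<Sum>l'<m. C1 $$ (l,l') * W l')) = \<beta> * (L $$ (k,k) * (\<Sum>l'<m. C2 $$ (l,l') * W l')))"
proof -
  define KC where "KC = map_mat (of_real :: real \<Rightarrow> complex) K"
  have KC: "KC \<in> carrier_mat n n" using K unfolding KC_def by simp
  from wit[folded KC_def] KC have L: "L \<in> carrier_mat n n" and Pm: "Pm \<in> carrier_mat n n" and Qm: "Qm \<in> carrier_mat n n"
    and PQ: "Pm * Qm = 1\<^sub>m n" and QP: "Qm * Pm = 1\<^sub>m n" and KPLQ: "KC = Pm * L * Qm"
    unfolding similar_mat_wit_def Let_def by auto
  have QK: "Qm * KC = L * Qm"
  proof -
    have "Qm * KC = (Qm * Pm) * L * Qm" unfolding KPLQ using Qm Pm L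
      by (simp add: assoc_mult_mat[of _ n n _ n _ n])
    thus ?thesis using QP L by simp
  qed
  define G where "G = kron_mat (1\<^sub>m m) Qm"
  have G: "G \<in> carrier_mat (m*n) (m*n)" unfolding G_def using Qm by auto
  define w where "w = G *\<^sub>v v"
  have w: "w \<in> carrier_vec (m*n)" unfolding w_def using G v by simp
  have comm: "G *\<^sub>v (kron_mat C KC *\<^sub>v v) = kron_mat C L *\<^sub>v w" if C: "C \<in> carrier_mat m m" for C
  proof -
    have "G *\<^sub>v (kron_mat C KC *\<^sub>v v) = (G * kron_mat C KC) *\<^sub>v v"
      using assoc_mult_mat_vec[OF G kron_carrier'[OF C KC] v] by simp
    also have "G * kron_mat C KC = kron_mat (1\<^sub>m m * C) (Qm * KC)"
      unfolding G_def by (rule kron_mult[OF one_carrier_mat Qm C KC])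
    also have "\<dots> = kron_mat (C * 1\<^sub>m m) (L * Qm)" using C QK by simp
    also have "\<dots> = kron_mat C L * G"
      unfolding G_def by (rule kron_mult[OF C L one_carrier_mat Qm, symmetric])
    also have "(kron_mat C L * G) *\<^sub>v v = kron_mat C L *\<^sub>v w"
      unfolding w_def using assoc_mult_mat_vec[OF kron_carrier'[OF C L] G v] by simp
    finally show ?thesis .
  qed
  have X1: "kron_mat C1 KC *\<^sub>v v \<in> carrier_vec (m*n)" by (rule mult_mat_vec_carrier[OF kron_carrier'[OF C1 KC] v])
  have X2: "kron_mat C2 KC *\<^sub>v v \<in> carrier_vec (m*n)" by (rule mult_mat_vec_carrier[OF kron_carrier'[OF C2 KC] v])
  have "G *\<^sub>v (\<alpha> \<cdot>\<^sub>v (v - kron_mat C1 KC *\<^sub>v v)) = \<alpha> \<cdot>\<^sub>v (w - kron_mat C1 L *\<^sub>v w)"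
    using G v X1 by (simp add: mult_mat_vec[OF G] mult_minus_distrib_mat_vec[OF G] w_def[symmetric] comm[OF C1])
  moreover have "G *\<^sub>v (\<beta> \<cdot>\<^sub>v (kron_mat C2 KC *\<^sub>v v)) = \<beta> \<cdot>\<^sub>v (kron_mat C2 L *\<^sub>v w)"
    using G v X2 by (simp add: mult_mat_vec[OF G] comm[OF C2])
  ultimately have eqw: "\<alpha> \<cdot>\<^sub>v (w - kron_mat C1 L *\<^sub>v w) = \<beta> \<cdot>\<^sub>v (kron_mat C2 L *\<^sub>v w)"
    using eq unfolding KC_def by simp
  have wnz: "w \<noteq> 0\<^sub>v (m*n)"
  proof
    assume w0: "w = 0\<^sub>v (m*n)"
    have "kron_mat (1\<^sub>m m) Pm * G = kron_mat (1\<^sub>m m * 1\<^sub>m m) (Pm * Qm)"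
      unfolding G_def by (rule kron_mult[OF one_carrier_mat Pm one_carrier_mat Qm])
    also have "\<dots> = 1\<^sub>m (m*n)" using PQ by (simp add: kron_one)
    finally have "v = kron_mat (1\<^sub>m m) Pm *\<^sub>v w"
      unfolding w_def using assoc_mult_mat_vec[OF kron_carrier'[OF one_carrier_mat Pm] G v] v by simp
    also have "\<dots> = 0\<^sub>v (m*n)" using w0 mult_zero_vec'[OF kron_carrier'[OF one_carrier_mat Pm, of m]] by simp
    finally show False using vnz by simp
  qed
  then obtain i where i: "i < m*n" and wi: "w $ i \<noteq> 0" using w
    by (metis carrier_vecD eq_vecI index_zero_vec(1,2))
  define l0 k0 where "l0 = i div n" and "k0 = i mod n"
  have l0: "l0 < m" and k0: "k0 < n" using div_mod_bnd[OF i] unfolding l0_def k0_def by auto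
  have i_eq: "i = l0 * n + k0" unfolding l0_def k0_def by simp
  define W where "W l = w $ (l*n+k0)" for l
  have Wnz: "\<exists>l<m. W l \<noteq> 0" using l0 wi unfolding W_def i_eq by blast
  have ev: "eigenvalue KC (L $$ (k0,k0))"
  proof -
    define u where "u = Pm *\<^sub>v unit_vec n k0"
    have u: "u \<in> carrier_vec n" unfolding u_def using Pm by simp
    have "KC *\<^sub>v u = Pm *\<^sub>v (L *\<^sub>v (Qm *\<^sub>v u))" unfolding KPLQ using Pm L Qm u
      by (simp add: assoc_mult_mat_vec[of _ n n _ n])
    also have "Qm *\<^sub>v u = unit_vec n k0" unfolding u_def using Qm Pm QP
      by (simp add: assoc_mult_mat_vec[of _ n n _ n, symmetric])
    also have "L *\<^sub>v unit_vec n k0 = L $$ (k0,k0) \<cdot>\<^sub>v unit_vec n k0"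
    proof (rule eq_vecI)
      fix j assume "j < dim_vec (L $$ (k0,k0) \<cdot>\<^sub>v unit_vec n k0)"
      hence j: "j < n" by simp
      have "(L *\<^sub>v unit_vec n k0) $ j = L $$ (j,k0)" using L j k0 by simp
      also have "\<dots> = (L $$ (k0,k0) \<cdot>\<^sub>v unit_vec n k0) $ j"
        using dL L j k0 unfolding diagonal_mat_def by (cases "j = k0") auto
      finally show "(L *\<^sub>v unit_vec n k0) $ j = (L $$ (k0,k0) \<cdot>\<^sub>v unit_vec n k0) $ j" .
    qed (use L in auto)
    also have "Pm *\<^sub>v (L $$ (k0,k0) \<cdot>\<^sub>v unit_vec n k0) = L $$ (k0,k0) \<cdot>\<^sub>v u"
      unfolding u_def by (rule mult_mat_vec[OF Pm]) simp
    finally have eu: "KC *\<^sub>v u = L $$ (k0,k0) \<cdot>\<^sub>v u" .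
    have "u \<noteq> 0\<^sub>v n"
    proof
      assume "u = 0\<^sub>v n"
      hence "Qm *\<^sub>v u = 0\<^sub>v n" using mult_zero_vec'[OF Qm] by simp
      moreover have "Qm *\<^sub>v u = unit_vec n k0" unfolding u_def using Qm Pm QP
        by (simp add: assoc_mult_mat_vec[of _ n n _ n, symmetric])
      ultimately have "unit_vec n k0 $ k0 = (0\<^sub>v n :: complex vec) $ k0" by simp
      thus False using k0 by simp
    qed
    thus ?thesis unfolding eigenvalue_def eigenvector_def using u eu KC by auto
  qed
  have eqW: "\<alpha> * (W l - L $$ (k0,k0) * (\<Sum>l'<m. C1 $$ (l,l') * W l')) = \<beta> * (L $$ (k0,k0) * (\<Sum>l'<m. C2 $$ (l,l') * W l'))"
    if l: "l < m" for l
  proof -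
    have il: "l*n+k0 < m*n" using l k0 by (rule ln_k_bound)
    have "(\<alpha> \<cdot>\<^sub>v (w - kron_mat C1 L *\<^sub>v w)) $ (l*n+k0) = (\<beta> \<cdot>\<^sub>v (kron_mat C2 L *\<^sub>v w)) $ (l*n+k0)"
      using eqw by simp
    thus ?thesis using il w C1 C2 L
      by (simp add: kron_diag_mult_vec[OF C1 L dL w l k0] kron_diag_mult_vec[OF C2 L dL w l k0] W_def)
  qed
  show ?thesis using k0 Wnz ev eqW unfolding KC_def by blast
qed




interpretation cpoly: comm_ring_hom "\<lambda>a::real. [:a:]"
  by unfold_locales (auto simp: one_pCons)

lemma prod_list_if_upt:
  assumes "s \<le> N"
  shows "prod_list (map (\<lambda>j. if j < s then 1 else p) [0..<N]) = (p::'a::comm_monoid_mult) ^ (N - s)"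
proof -
  have "prod_list (map (\<lambda>j. if j < s then 1 else p) [0..<N]) = (\<Prod>j\<in>{0..<N}. if j < s then 1 else p)"
    by (subst prod.distinct_set_conv_list[symmetric]) auto
  also have "\<dots> = (\<Prod>j\<in>{0..<s}. if j < s then 1 else p) * (\<Prod>j\<in>{s..<N}. if j < s then 1 else p)"
    by (rule prod.atLeastLessThan_concat[symmetric]) (use assms in auto)
  also have "(\<Prod>j\<in>{0..<s}. if j < s then 1 else p) = 1" by (intro prod.neutral) auto
  also have "(\<Prod>j\<in>{s..<N}. if j < s then 1 else p) = (\<Prod>j\<in>{s..<N}. p)" by (intro prod.cong) auto
  also have "\<dots> = p ^ (N - s)" by simp
  finally show ?thesis by simp
qed

lemma mult_part:
  fixes X Q R :: "real mat"
  assumes X: "X \<in> carrier_mat N N" and Q: "Q \<in> carrier_mat N N" and utQ: "upper_triangular Q"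
    and dQ: "\<forall>i<N. Q $$ (i,i) \<noteq> 0" and R: "R \<in> carrier_mat N N"
    and XQ: "X * Q = Q - R" and R0: "\<forall>i<N. \<forall>j<N. s \<le> j \<longrightarrow> R $$ (i,j) = 0" and sN: "s \<le> N"
  shows "N - s \<le> order 1 (char_poly X)"
proof -
  define p :: "real poly" where "p = [:-1,1:]"
  define C where "C = char_poly_matrix X"
  define Qp where "Qp = map_mat (\<lambda>a. [:a:]) Q"
  have C: "C \<in> carrier_mat N N" unfolding C_def using X by simp
  have Qp: "Qp \<in> carrier_mat N N" unfolding Qp_def using Q by simp
  have CQ: "(C * Qp) $$ (i,j) = [:0,1:] * [:Q $$ (i,j):] - [:(X * Q) $$ (i,j):]" if i: "i < N" and j: "j < N" for i j
  proof -
    have "(C * Qp) $$ (i,j) = (\<Sum>t<N. C $$ (i,t) * Qp $$ (t,j))"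
      using C Qp i j by (simp add: scalar_prod_def lessThan_atLeast0)
    also have "\<dots> = (\<Sum>t<N. [:0,1:] * [:Q $$ (t,j):] * (if t = i then 1 else 0) - [:X $$ (i,t) * Q $$ (t,j):])"
      unfolding C_def Qp_def char_poly_matrix_def using X Q i j
      by (intro sum.cong refl) (auto simp: algebra_simps)
    also have "\<dots> = [:0,1:] * [:Q $$ (i,j):] - (\<Sum>t<N. [:X $$ (i,t) * Q $$ (t,j):])"
      by (simp only: sum_subtractf sum_if_delta if_P[OF i])
    also have "(\<Sum>t<N. [:X $$ (i,t) * Q $$ (t,j):]) = [:(X * Q) $$ (i,j):]"
      using X Q i j by (simp add: scalar_prod_def lessThan_atLeast0 cpoly.hom_sum)
    finally show ?thesis .
  qed
  define W where "W = mat N N (\<lambda>(i,j). if j < s then (C * Qp) $$ (i,j) else Qp $$ (i,j))"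
  define Dg where "Dg = mat N N (\<lambda>(i,j). if i = j then (if j < s then 1 else p) else 0)"
  have W: "W \<in> carrier_mat N N" and Dg: "Dg \<in> carrier_mat N N" unfolding W_def Dg_def by auto
  have CQW: "C * Qp = W * Dg"
  proof (rule eq_matI)
    fix i j assume "i < dim_row (W * Dg)" "j < dim_col (W * Dg)"
    hence i: "i < N" and j: "j < N" using W Dg by auto
    have "(W * Dg) $$ (i,j) = W $$ (i,j) * (if j < s then 1 else p)"
      by (rule mult_diag_index[OF W Dg i j]) (use j in \<open>auto simp: Dg_def\<close>)
    also have "\<dots> = (C * Qp) $$ (i,j)"
    proof (cases "j < s")
      case True thus ?thesis unfolding W_def using i j by simp
    next
      case False
      hence "R $$ (i,j) = 0" using R0 i j by auto
      hence "(X * Q) $$ (i,j) = Q $$ (i,j)" using XQ Q R i j by simp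
      thus ?thesis unfolding W_def using i j False CQ[OF i j]
        by (simp add: Qp_def p_def Q[THEN carrier_matD(1)] Q[THEN carrier_matD(2)] algebra_simps)
    qed
    finally show "(C * Qp) $$ (i,j) = (W * Dg) $$ (i,j)" by simp
  qed (use C Qp W Dg in auto)
  have detDg: "det Dg = p ^ (N - s)"
  proof -
    have "det Dg = prod_list (diag_mat Dg)"
      by (rule det_upper_triangular[OF _ Dg]) (auto simp: upper_triangular_def Dg_def)
    also have "diag_mat Dg = map (\<lambda>j. if j < s then 1 else p) [0..<N]"
      unfolding diag_mat_def Dg_def by auto
    finally show ?thesis using prod_list_if_upt[OF sN] by simp
  qed
  have detQ: "det Q \<noteq> 0"
  proof -
    have "det Q = prod_list (diag_mat Q)" by (rule det_upper_triangular[OF utQ Q])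
    moreover have "0 \<notin> set (diag_mat Q)" using dQ Q unfolding diag_mat_def by auto
    ultimately show ?thesis by (simp add: prod_list_zero_iff)
  qed
  have detQp: "det Qp = [:det Q:]" unfolding Qp_def by (rule cpoly.hom_det)
  have "char_poly X * [:det Q:] = det W * p ^ (N - s)"
  proof -
    have "char_poly X * [:det Q:] = det (C * Qp)"
      unfolding char_poly_def C_def[symmetric] detQp[symmetric] by (rule det_mult[OF C Qp, symmetric])
    also have "\<dots> = det W * det Dg" unfolding CQW by (rule det_mult[OF W Dg])
    finally show ?thesis unfolding detDg .
  qed
  hence d1: "p ^ (N - s) dvd char_poly X * [:det Q:]" by (metis dvd_triv_right)
  have u: "is_unit [:det Q:]" using detQ by (simp add: is_unit_const_poly_iff)
  have dv: "p ^ (N - s) dvd char_poly X" using dvd_mult_unit_iff[OF u] d1 by blast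
  have "char_poly X \<noteq> 0" using degree_monic_char_poly[OF X] by auto
  thus ?thesis using dv order_divides[of 1 "N - s" "char_poly X"] unfolding p_def by blast
qed




lemma det_ne0_invertible:
  fixes A :: "real mat"
  assumes A: "A \<in> carrier_mat n n" and d: "det A \<noteq> 0"
  shows "invertible_mat A"
proof -
  from det_non_zero_imp_unit[OF A d] obtain B where B: "B \<in> carrier_mat n n"
    and "B * A = 1\<^sub>m n" "A * B = 1\<^sub>m n"
    unfolding Units_def ring_mat_def by auto
  thus ?thesis using A unfolding invertible_mat_def inverts_mat_def square_mat.simps by auto
qed

lemma zero_smult_vec': "u \<in> carrier_vec N \<Longrightarrow> 0 \<cdot>\<^sub>v u = (0\<^sub>v N :: 'a::comm_ring_1 vec)"
  by (intro eq_vecI) auto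

abbreviation Hh :: "nat \<Rightarrow> real mat" where "Hh M \<equiv> mat (2*M+1) (2*M+1) (\<lambda>_. 1/2)"

lemma A_eq:
  assumes K: "K \<in> carrier_mat n n"
  shows "A_mat M h T K = P_mat M h T K - kron_mat (Hh M * D_mat M h T) K"
proof -
  have "Im1_mat M * D_mat M h T = S_mat M * D_mat M h T + Hh M * D_mat M h T"
    unfolding Im1_split by (rule add_mult_distrib_mat[OF S_carrier _ D_carrier]) auto
  hence kr: "kron_mat (Im1_mat M * D_mat M h T) K = kron_mat (S_mat M * D_mat M h T) K + kron_mat (Hh M * D_mat M h T) K"
    by (simp only: kron_add_left[OF mult_carrier_mat[OF S_carrier D_carrier] mult_carrier_mat[OF mat_carrier D_carrier]])
  show ?thesis unfolding A_mat_def P_mat_def kr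
    by (rule eq_matI) (use K in auto)
qed

lemma map_one_minus: "X \<in> carrier_mat N N \<Longrightarrow> map_mat (of_real :: real \<Rightarrow> complex) (1\<^sub>m N - X) = 1\<^sub>m N - map_mat of_real X"
  by (rule eq_matI) auto

lemma SD_index: "l < 2*M+1 \<Longrightarrow> j < 2*M+1 \<Longrightarrow> (S_mat M * D_mat M h T) $$ (l,j) = S_mat M $$ (l,j) * dd M h T j"
  by (rule mult_D_index[OF S_carrier])
lemma HD_index: "l < 2*M+1 \<Longrightarrow> j < 2*M+1 \<Longrightarrow> (Hh M * D_mat M h T) $$ (l,j) = 1/2 * dd M h T j"
  using mult_D_index[OF mat_carrier[of "2*M+1" "2*M+1" "\<lambda>_. 1/2"]] by simp

lemma lam_real:
  assumes spec: "\<forall>\<mu>. eigenvalue KC \<mu> \<longrightarrow> \<mu> \<in> \<real> \<and> Re \<mu> < 0" and ev: "eigenvalue KC lm"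
  shows "\<exists>lam. lam < 0 \<and> lm = complex_of_real lam"
proof -
  from spec ev have "lm \<in> \<real>" "Re lm < 0" by auto
  thus ?thesis by (intro exI[of _ "Re lm"]) (auto simp: Reals_def)
qed

theorem theorem3p3:
  fixes M n :: nat and h T :: real and K :: "real mat"
  assumes "M \<ge> 1" and "h > 0" and "T > 0"
    and "K \<in> carrier_mat n n"
    and diag: "\<exists>\<Lambda>. diagonal_mat \<Lambda> \<and> similar_mat (map_mat complex_of_real K) \<Lambda>"
    and spec: "\<forall>\<mu>. eigenvalue (map_mat complex_of_real K) \<mu> \<longrightarrow> \<mu> \<in> \<real> \<and> Re \<mu> < 0"
  shows "invertible_mat (P_mat M h T K) \<and>
    (\<forall>Pinv \<in> carrier_mat ((2*M+1) * n) ((2*M+1) * n).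
       Pinv * P_mat M h T K = 1\<^sub>m ((2*M+1) * n) \<longrightarrow>
         order 1 (char_poly (Pinv * A_mat M h T K)) \<ge> n * (2*M) \<and>
         (\<forall>\<mu>. eigenvalue (map_mat complex_of_real (Pinv * A_mat M h T K)) \<mu> \<longrightarrow>
              \<mu> \<in> \<real> \<and> Re \<mu> \<ge> 1))"
proof -
  note K = \<open>K \<in> carrier_mat n n\<close>
  define m where "m = 2*M+1"
  define N where "N = m * n"
  define d where "d = dd M h T"
  have dpos: "\<forall>l<m. d l > 0" unfolding d_def using assms dd_pos by blast
  define SD where "SD = S_mat M * D_mat M h T"
  define HD where "HD = Hh M * D_mat M h T"
  have SD: "SD \<in> carrier_mat m m" unfolding SD_def m_def by (rule mult_carrier_mat[OF S_carrier D_carrier])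
  have HD: "HD \<in> carrier_mat m m" unfolding HD_def m_def by (rule mult_carrier_mat[OF mat_carrier D_carrier])
  have SDi: "SD $$ (l,j) = S_mat M $$ (l,j) * d j" if "l < m" "j < m" for l j
    unfolding SD_def d_def using that SD_index unfolding m_def by blast
  have HDi: "HD $$ (l,j) = 1/2 * d j" if "l < m" "j < m" for l j
    unfolding HD_def d_def using that HD_index unfolding m_def by blast
  have skew: "\<forall>l<m. \<forall>j<m. S_mat M $$ (l,j) = - S_mat M $$ (j,l)"
    unfolding m_def using S_skew by blast
  define P where "P = P_mat M h T K"
  define A where "A = A_mat M h T K"
  define Z where "Z = kron_mat HD K"
  have Pdef: "P = 1\<^sub>m N - kron_mat SD K" unfolding P_def P_mat_def N_def m_def SD_def using K by simp
  have AZ: "A = P - Z" unfolding A_def P_def Z_def HD_def using A_eq[OF K] .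
  have Pc: "P \<in> carrier_mat N N" unfolding Pdef N_def using SD K by auto
  have Zc: "Z \<in> carrier_mat N N" unfolding Z_def N_def using HD K by auto
  have Ac: "A \<in> carrier_mat N N" unfolding AZ using Pc Zc by auto
  define KC where "KC = map_mat (of_real :: real \<Rightarrow> complex) K"
  define SDc where "SDc = map_mat (of_real :: real \<Rightarrow> complex) SD"
  define HDc where "HDc = map_mat (of_real :: real \<Rightarrow> complex) HD"
  have SDc: "SDc \<in> carrier_mat m m" and HDc: "HDc \<in> carrier_mat m m" unfolding SDc_def HDc_def using SD HD by auto
  have KC: "KC \<in> carrier_mat n n" unfolding KC_def using K by auto
  have PC: "map_mat of_real P = 1\<^sub>m N - kron_mat SDc KC"
    unfolding Pdef SDc_def KC_def N_def using map_one_minus[OF kron_carrier'[OF SD K]]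
    by (simp add: kron_map)
  have ZC: "map_mat of_real Z = kron_mat HDc KC"
    unfolding Z_def HDc_def KC_def by (simp add: kron_map)
  from diag obtain L where dL: "diagonal_mat L" and "similar_mat KC L" unfolding KC_def by blast
  then obtain Pm Qm where wit: "similar_mat_wit KC L Pm Qm" unfolding similar_mat_def by blast
  have "det P \<noteq> 0"
  proof
    assume "det P = 0"
    then obtain v where v: "v \<in> carrier_vec N" and vnz: "v \<noteq> 0\<^sub>v N" and Pv: "P *\<^sub>v v = 0\<^sub>v N"
      using det_0_iff_vec_prod_zero_field[OF Pc] by blast
    define vC where "vC = map_vec (of_real :: real \<Rightarrow> complex) v"
    have vC: "vC \<in> carrier_vec N" unfolding vC_def using v by simp
    have vCnz: "vC \<noteq> 0\<^sub>v N"
    proof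
      assume vC0: "vC = 0\<^sub>v N"
      have "v = 0\<^sub>v N"
      proof (rule eq_vecI)
        fix i assume i: "i < dim_vec (0\<^sub>v N :: real vec)"
        hence "vC $ i = 0" using vC0 by simp
        thus "v $ i = 0\<^sub>v N $ i" using i v unfolding vC_def by simp
      qed (use v in auto)
      thus False using vnz by simp
    qed
    have "map_mat of_real P *\<^sub>v vC = map_vec of_real (P *\<^sub>v v)"
      unfolding vC_def by (rule of_real_hom.mult_mat_vec_hom[OF Pc v, symmetric])
    also have "\<dots> = 0\<^sub>v N" using Pv by simp
    finally have PCv: "(1\<^sub>m N - kron_mat SDc KC) *\<^sub>v vC = 0\<^sub>v N" unfolding PC .
    have X1: "kron_mat SDc KC \<in> carrier_mat N N" unfolding N_def using SDc KC by auto
    have X2: "kron_mat HDc KC \<in> carrier_mat N N" unfolding N_def using HDc KC by auto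
    have eq: "1 \<cdot>\<^sub>v (vC - kron_mat SDc KC *\<^sub>v vC) = 0 \<cdot>\<^sub>v (kron_mat HDc KC *\<^sub>v vC)"
    proof -
      have "vC - kron_mat SDc KC *\<^sub>v vC = 0\<^sub>v N"
        using PCv vC X1 by (simp add: minus_mult_distrib_mat_vec[OF one_carrier_mat X1 vC])
      moreover have "0 \<cdot>\<^sub>v (kron_mat HDc KC *\<^sub>v vC) = 0\<^sub>v N"
        by (rule zero_smult_vec'[OF mult_mat_vec_carrier[OF X2 vC]])
      ultimately show ?thesis by simp
    qed
    from decouple[OF K wit[unfolded KC_def] dL SDc HDc vC[unfolded N_def] vCnz[unfolded N_def] eq[unfolded KC_def]]
    obtain k W where k: "k < n" and Wnz: "\<exists>l<m. W l \<noteq> 0" and ev: "eigenvalue KC (L $$ (k,k))"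
      and eqW: "\<forall>l<m. 1 * (W l - L $$ (k,k) * (\<Sum>l'<m. SDc $$ (l,l') * W l')) = 0 * (L $$ (k,k) * (\<Sum>l'<m. HDc $$ (l,l') * W l'))"
      unfolding KC_def by blast
    obtain lam where lam: "lam < 0" "L $$ (k,k) = of_real lam" using lam_real[OF spec[folded KC_def] ev] by blast
    have "\<forall>l<m. W l - of_real lam * (\<Sum>j<m. of_real (S_mat M $$ (l,j) * d j) * W j) = 0"
    proof (intro allI impI)
      fix l assume l: "l < m"
      have "(\<Sum>l'<m. SDc $$ (l,l') * W l') = (\<Sum>j<m. of_real (S_mat M $$ (l,j) * d j) * W j)"
        using l SD by (intro sum.cong refl) (auto simp: SDc_def SDi)
      thus "W l - of_real lam * (\<Sum>j<m. of_real (S_mat M $$ (l,j) * d j) * W j) = 0"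
        using eqW l lam by simp
    qed
    from core_cplx[OF skew dpos this] Wnz show False by blast
  qed
  hence invP: "invertible_mat P" by (rule det_ne0_invertible[OF Pc])
  have Ndef: "(2*M+1)*n = N" unfolding N_def m_def ..
  have part_mult: "n * (2*M) \<le> order 1 (char_poly (Pinv * A))"
    if Pinv: "Pinv \<in> carrier_mat N N" and PinvP: "Pinv * P = 1\<^sub>m N" for Pinv
  proof -
    have PPinv: "P * Pinv = 1\<^sub>m N" by (rule mat_mult_left_right_inverse[OF Pinv Pc PinvP])
    have Xc: "Pinv * A \<in> carrier_mat N N" using Pinv Ac by auto
    define Tm where "Tm = mat m m (\<lambda>(a,l). if l = 0 then (if a = 0 then 1 else 0)
                          else (if a = l then d 0 else if a = 0 then - d l else 0))"
    have Tm: "Tm \<in> carrier_mat m m" unfolding Tm_def by simp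
    define Q where "Q = kron_mat Tm (1\<^sub>m n)"
    have Qc: "Q \<in> carrier_mat N N" unfolding Q_def N_def using Tm by auto
    have m0: "0 < m" unfolding m_def by simp
    have d0: "d 0 > 0" using dpos m0 by auto
    have Qi: "Q $$ (i,j) = Tm $$ (i div n, j div n) * (if i mod n = j mod n then 1 else 0)"
      if "i < N" "j < N" for i j
      using that div_mod_bnd[of i m n] div_mod_bnd[of j m n] Tm unfolding Q_def N_def
      by (simp add: kron_index)
    have utQ: "upper_triangular Q"
      unfolding upper_triangular_def
    proof (intro allI impI)
      fix i j assume i: "i < dim_row Q" and ji: "j < i"
      hence iN: "i < N" and jN: "j < N" using Qc by auto
      have le: "j div n \<le> i div n" using ji by (simp add: div_le_mono)
      show "Q $$ (i,j) = 0"
      proof (cases "j div n = i div n")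
        case True
        hence "i mod n \<noteq> j mod n" using ji by (metis div_mult_mod_eq less_irrefl)
        thus ?thesis using Qi[OF iN jN] by simp
      next
        case False
        hence lt: "j div n < i div n" using le by simp
        have "Tm $$ (i div n, j div n) = 0"
          using lt div_mod_bnd[of i m n] iN unfolding Tm_def N_def by auto
        thus ?thesis using Qi[OF iN jN] by simp
      qed
    qed
    have dQ: "\<forall>i<N. Q $$ (i,i) \<noteq> 0"
    proof (intro allI impI)
      fix i assume iN: "i < N"
      have "Tm $$ (i div n, i div n) \<noteq> 0"
        using div_mod_bnd[of i m n] iN d0 unfolding Tm_def N_def by auto
      thus "Q $$ (i,i) \<noteq> 0" using Qi[OF iN iN] by simp
    qed
    have HT0: "(HD * Tm) $$ (a,l) = 0" if a: "a < m" and l: "l < m" and l1: "l \<noteq> 0" for a l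
    proof -
      have "(HD * Tm) $$ (a,l) = (\<Sum>b<m. HD $$ (a,b) * Tm $$ (b,l))"
        using HD Tm a l by (simp add: scalar_prod_def lessThan_atLeast0)
      also have "\<dots> = (\<Sum>b<m. (1/2 * d b) * (if b = l then d 0 else 0) + (1/2 * d b) * (if b = 0 then - d l else 0))"
        using a l l1 by (intro sum.cong refl) (auto simp: HDi Tm_def)
      also have "\<dots> = (1/2 * d l) * d 0 + (1/2 * d 0) * (- d l)"
        using l m0 by (simp only: sum.distrib sum_if_delta if_True)
      finally show ?thesis by simp
    qed
    define R where "R = Pinv * (Z * Q)"
    have Rc: "R \<in> carrier_mat N N" unfolding R_def using Pinv Zc Qc by auto
    have ZQ: "Z * Q = kron_mat (HD * Tm) (K * 1\<^sub>m n)"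
      unfolding Z_def Q_def by (rule kron_mult[OF HD K Tm one_carrier_mat])
    have ZQ0: "(Z * Q) $$ (t,j) = 0" if t: "t < N" and j: "j < N" and jn: "n \<le> j" for t j
    proof -
      have "n > 0" using j unfolding N_def by (auto intro!: Nat.gr0I)
      hence jd: "j div n \<noteq> 0" using jn by (simp add: div_greater_zero_iff)
      have "(Z * Q) $$ (t,j) = (HD * Tm) $$ (t div n, j div n) * (K * 1\<^sub>m n) $$ (t mod n, j mod n)"
        unfolding ZQ using t j HD Tm K unfolding N_def by (simp add: kron_index)
      also have "(HD * Tm) $$ (t div n, j div n) = 0"
        using HT0 div_mod_bnd[of t m n] div_mod_bnd[of j m n] t j jd unfolding N_def by auto
      finally show ?thesis by simp
    qed
    have R0: "\<forall>i<N. \<forall>j<N. n \<le> j \<longrightarrow> R $$ (i,j) = 0"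
    proof (intro allI impI)
      fix i j assume i: "i < N" and j: "j < N" and jn: "n \<le> j"
      have "R $$ (i,j) = (\<Sum>t<N. Pinv $$ (i,t) * (Z * Q) $$ (t,j))"
        unfolding R_def using Pinv Zc Qc i j by (simp add: scalar_prod_def lessThan_atLeast0)
      also have "\<dots> = 0" using ZQ0 j jn by simp
      finally show "R $$ (i,j) = 0" .
    qed
    have XQ: "Pinv * A * Q = Q - R"
    proof -
      have "Pinv * A * Q = Pinv * (A * Q)" using Pinv Ac Qc by (simp add: assoc_mult_mat[of _ N N _ N _ N])
      also have "A * Q = P * Q - Z * Q" unfolding AZ by (rule minus_mult_distrib_mat[OF Pc Zc Qc])
      also have "Pinv * (P * Q - Z * Q) = Pinv * (P * Q) - Pinv * (Z * Q)"
        by (rule mult_minus_distrib_mat[OF Pinv]) (use Pc Zc Qc in auto)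
      also have "Pinv * (P * Q) = Q" using Pinv Pc Qc PinvP by (simp add: assoc_mult_mat[of _ N N _ N _ N, symmetric])
      finally show ?thesis unfolding R_def .
    qed
    have nN: "n \<le> N" unfolding N_def using m0 by simp
    have "N - n \<le> order 1 (char_poly (Pinv * A))"
      by (rule mult_part[OF Xc Qc utQ dQ Rc XQ R0 nN])
    moreover have "N - n = n * (2*M)" unfolding N_def m_def by (simp add: algebra_simps)
    ultimately show "n * (2*M) \<le> order 1 (char_poly (Pinv * A))" by simp
  qed
  have part_eig: "mu \<in> \<real> \<and> 1 \<le> Re mu"
    if Pinv: "Pinv \<in> carrier_mat N N" and PinvP: "Pinv * P = 1\<^sub>m N"
      and ev: "eigenvalue (map_mat complex_of_real (Pinv * A)) mu" for Pinv mu
  proof -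
    have PPinv: "P * Pinv = 1\<^sub>m N" by (rule mat_mult_left_right_inverse[OF Pinv Pc PinvP])
    define PinvC where "PinvC = map_mat (of_real :: real \<Rightarrow> complex) Pinv"
    define AC where "AC = map_mat (of_real :: real \<Rightarrow> complex) A"
    define PCm where "PCm = map_mat (of_real :: real \<Rightarrow> complex) P"
    define ZCm where "ZCm = map_mat (of_real :: real \<Rightarrow> complex) Z"
    have PinvC: "PinvC \<in> carrier_mat N N" and ACc: "AC \<in> carrier_mat N N" and PCc: "PCm \<in> carrier_mat N N"
      and ZCc: "ZCm \<in> carrier_mat N N"
      unfolding PinvC_def AC_def PCm_def ZCm_def using Pinv Ac Pc Zc by auto
    have XC: "map_mat complex_of_real (Pinv * A) = PinvC * AC"
      unfolding PinvC_def AC_def by (rule of_real_hom.mat_hom_mult[OF Pinv Ac])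
    have PPC: "PCm * PinvC = 1\<^sub>m N"
      unfolding PCm_def PinvC_def of_real_hom.mat_hom_mult[OF Pc Pinv, symmetric] PPinv by (rule of_real_hom.mat_hom_one)
    have ACeq: "AC = PCm - ZCm" unfolding AC_def PCm_def ZCm_def AZ
      by (rule eq_matI) (use Pc Zc in auto)
    from ev obtain v where v: "v \<in> carrier_vec N" and vnz: "v \<noteq> 0\<^sub>v N"
      and Xv: "(PinvC * AC) *\<^sub>v v = mu \<cdot>\<^sub>v v"
      unfolding eigenvalue_def eigenvector_def XC using PinvC ACc by auto
    have AVv: "AC *\<^sub>v v \<in> carrier_vec N" using ACc v by simp
    have "AC *\<^sub>v v = (PCm * PinvC) *\<^sub>v (AC *\<^sub>v v)" unfolding PPC using AVv by simp
    also have "\<dots> = PCm *\<^sub>v (PinvC *\<^sub>v (AC *\<^sub>v v))" using PCc PinvC AVv by simp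
    also have "PinvC *\<^sub>v (AC *\<^sub>v v) = mu \<cdot>\<^sub>v v" using Xv PinvC ACc v by simp
    also have "PCm *\<^sub>v (mu \<cdot>\<^sub>v v) = mu \<cdot>\<^sub>v (PCm *\<^sub>v v)" by (rule mult_mat_vec[OF PCc v])
    finally have AV: "AC *\<^sub>v v = mu \<cdot>\<^sub>v (PCm *\<^sub>v v)" .
    have AV2: "AC *\<^sub>v v = PCm *\<^sub>v v - ZCm *\<^sub>v v"
      unfolding ACeq by (rule minus_mult_distrib_mat_vec[OF PCc ZCc v])
    have X1: "kron_mat SDc KC \<in> carrier_mat N N" unfolding N_def using SDc KC by auto
    have X2: "kron_mat HDc KC \<in> carrier_mat N N" unfolding N_def using HDc KC by auto
    have PCv: "PCm *\<^sub>v v = v - kron_mat SDc KC *\<^sub>v v"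
      unfolding PCm_def PC using minus_mult_distrib_mat_vec[OF one_carrier_mat X1 v] v by simp
    have ZCv: "ZCm *\<^sub>v v = kron_mat HDc KC *\<^sub>v v" unfolding ZCm_def ZC ..
    have eq: "(1 - mu) \<cdot>\<^sub>v (v - kron_mat SDc KC *\<^sub>v v) = 1 \<cdot>\<^sub>v (kron_mat HDc KC *\<^sub>v v)"
    proof (rule eq_vecI)
      fix i assume "i < dim_vec (1 \<cdot>\<^sub>v (kron_mat HDc KC *\<^sub>v v))"
      hence i: "i < N" using HDc KC unfolding N_def by simp
      have "(AC *\<^sub>v v) $ i = (mu \<cdot>\<^sub>v (PCm *\<^sub>v v)) $ i" using AV by simp
      moreover have "(AC *\<^sub>v v) $ i = (PCm *\<^sub>v v) $ i - (ZCm *\<^sub>v v) $ i" using AV2 i PCc ZCc by simp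
      ultimately have "(PCm *\<^sub>v v) $ i - (ZCm *\<^sub>v v) $ i = mu * (PCm *\<^sub>v v) $ i" using i PCc by simp
      hence "(1 - mu) * (PCm *\<^sub>v v) $ i = (ZCm *\<^sub>v v) $ i" by (simp add: algebra_simps)
      thus "((1 - mu) \<cdot>\<^sub>v (v - kron_mat SDc KC *\<^sub>v v)) $ i = (1 \<cdot>\<^sub>v (kron_mat HDc KC *\<^sub>v v)) $ i"
        unfolding PCv ZCv using i SDc KC v unfolding N_def by simp
    qed (use SDc HDc KC v in auto)
    from decouple[OF K wit[unfolded KC_def] dL SDc HDc v[unfolded N_def] vnz[unfolded N_def] eq[unfolded KC_def]]
    obtain k W where k: "k < n" and Wnz: "\<exists>l<m. W l \<noteq> 0" and ev: "eigenvalue KC (L $$ (k,k))"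
      and eqW: "\<forall>l<m. (1 - mu) * (W l - L $$ (k,k) * (\<Sum>l'<m. SDc $$ (l,l') * W l')) = 1 * (L $$ (k,k) * (\<Sum>l'<m. HDc $$ (l,l') * W l'))"
      unfolding KC_def by blast
    obtain lam where lam: "lam < 0" "L $$ (k,k) = of_real lam" using lam_real[OF spec[folded KC_def] ev] by blast
    have "\<forall>l<m. (1 - mu) * (W l - of_real lam * (\<Sum>j<m. of_real (S_mat M $$ (l,j) * d j) * W j))
                  = of_real (lam / 2) * (\<Sum>j<m. of_real (d j) * W j)"
    proof (intro allI impI)
      fix l assume l: "l < m"
      have s1: "(\<Sum>l'<m. SDc $$ (l,l') * W l') = (\<Sum>j<m. of_real (S_mat M $$ (l,j) * d j) * W j)"
        using l SD by (intro sum.cong refl) (auto simp: SDc_def SDi)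
      have "(\<Sum>l'<m. HDc $$ (l,l') * W l') = (\<Sum>j<m. of_real (1/2) * (of_real (d j) * W j))"
        using l HD by (intro sum.cong refl) (auto simp: HDc_def HDi)
      also have "\<dots> = of_real (1/2) * (\<Sum>j<m. of_real (d j) * W j)" by (simp add: sum_distrib_left)
      finally have s2: "of_real lam * (\<Sum>l'<m. HDc $$ (l,l') * W l') = of_real (lam / 2) * (\<Sum>j<m. of_real (d j) * W j)"
        by simp
      show "(1 - mu) * (W l - of_real lam * (\<Sum>j<m. of_real (S_mat M $$ (l,j) * d j) * W j))
                  = of_real (lam / 2) * (\<Sum>j<m. of_real (d j) * W j)"
      proof -
        have "(1 - mu) * (W l - L $$ (k,k) * (\<Sum>l'<m. SDc $$ (l,l') * W l')) = 1 * (L $$ (k,k) * (\<Sum>l'<m. HDc $$ (l,l') * W l'))"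
          using eqW l by blast
        hence "(1 - mu) * (W l - of_real lam * (\<Sum>j<m. of_real (S_mat M $$ (l,j) * d j) * W j))
             = of_real lam * (\<Sum>l'<m. HDc $$ (l,l') * W l')"
          unfolding lam(2) s1 by simp
        thus ?thesis using s2 by (rule trans)
      qed
    qed
    from core_eig[OF skew dpos lam(1) Wnz this] have "mu \<in> \<real> \<and> 1 \<le> Re mu" .
    thus "mu \<in> \<real> \<and> 1 \<le> Re mu" by simp
  qed
  show ?thesis unfolding Ndef P_def[symmetric] A_def[symmetric]
    using invP part_mult part_eig by blast
qed


end
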